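(* Let $k\geq 2$ be a fixed integer. There are constants $c_1,c_2>0$ depending only on $k$ such that the following holds. Let $G=(A\cup B,E)$ be a bipartite graph with parts $A$ and $B$, where $a=|A|\geq b=|B|$, let $m=|E|$, and let $t$ be the number of copies of $C_{2k}$ in $G$. If $m \geq c_1\, a\, b^{1/k}$, then $t \geq c_2\, \dfrac{m^{2k}}{a^k b^k}$.
   Context: $C_{2k}$ denotes the cycle on $2k$ vertices; a copy of $C_{2k}$ in $G$ is a subgraph of $G$ isomorphic to $C_{2k}$. *)

theory Defs
  imports Complex_Main
begin

definition bipartite_graph :: "'a set \<Rightarrow> 'a set \<Rightarrow> 'a set set \<Rightarrow> bool" where
  "bipartite_graph A B E \<longleftrightarrow> finite A \<and> finite B \<and> A \<inter> B = {} \<and>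
     (\<forall>e\<in>E. \<exists>x\<in>A. \<exists>y\<in>B. e = {x, y})"

definition cycle_edges :: "nat \<Rightarrow> (nat \<Rightarrow> 'a) \<Rightarrow> 'a set set" where
  "cycle_edges n f = {{f i, f ((i + 1) mod n)} | i. i < n}"

text \<open>Copies of C_n in a graph with edge set E: subgraphs isomorphic to the cycle C_n.
  A copy of a cycle has no isolated vertices, so it is determined by its edge set;
  we count these edge sets.\<close>
definition cycle_copies :: "nat \<Rightarrow> 'a set set \<Rightarrow> 'a set set set" where
  "cycle_copies n E = {H. H \<subseteq> E \<and> (\<exists>f. inj_on f {..<n} \<and> H = cycle_edges n f)}"

end

theory Submission
  imports Defs "HOL-Library.FuncSet" "HOL-Analysis.Convex"
begin

definition Pth :: "'a set set \<Rightarrow> 'a set \<Rightarrow> nat \<Rightarrow> 'a \<Rightarrow> 'a \<Rightarrow> (nat \<Rightarrow> 'a) set" where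
  "Pth E V j u v = {f \<in> {..j} \<rightarrow>\<^sub>E V. f 0 = u \<and> f j = v \<and> (\<forall>i<j. {f i, f (Suc i)} \<in> E)}"

definition W :: "'a set set \<Rightarrow> 'a set \<Rightarrow> nat \<Rightarrow> 'a \<Rightarrow> 'a \<Rightarrow> real" where
  "W E V j u v = real (card (Pth E V j u v))"

definition adj :: "'a set set \<Rightarrow> 'a \<Rightarrow> 'a \<Rightarrow> real" where
  "adj E x y = (if {x,y} \<in> E then 1 else 0)"

locale gr = fixes E :: "'a set set" and V :: "'a set"
  assumes finV: "finite V" and EV: "\<And>e. e \<in> E \<Longrightarrow> e \<subseteq> V"
begin

lemma finite_Pth: "finite (Pth E V j u v)"
  unfolding Pth_def using finV by (intro finite_subset[OF _ finite_PiE[of "{..j}" "\<lambda>_. V"]]) auto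

lemma W_nonneg: "W E V j u v \<ge> 0" by (simp add: W_def)

lemma adj_sym: "adj E x y = adj E y x" by (simp add: adj_def insert_commute)

lemma core:
  "real (card {f \<in> Pth E V (Suc j) u v. P (restrict f {..j})}) =
     (\<Sum>w\<in>V. real (card {g \<in> Pth E V j u w. P g}) * adj E w v)"
proof -
  define S where "S w = {g \<in> Pth E V j u w. P g}" for w
  define ext where "ext g = g(Suc j := v)" for g :: "nat \<Rightarrow> 'a"
  define Vv where "Vv = {w \<in> V. {w,v} \<in> E}"
  have eq: "{f \<in> Pth E V (Suc j) u v. P (restrict f {..j})} = (\<Union>w\<in>Vv. ext ` S w)"
  proof (intro equalityI subsetI)
    fix f assume f: "f \<in> {f \<in> Pth E V (Suc j) u v. P (restrict f {..j})}"
    hence fP: "f \<in> {..Suc j} \<rightarrow>\<^sub>E V" "f 0 = u" "f (Suc j) = v" "\<forall>i<Suc j. {f i, f (Suc i)} \<in> E"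
      "P (restrict f {..j})" by (auto simp: Pth_def)
    define g where "g = restrict f {..j}"
    have "g \<in> S (f j)" unfolding S_def Pth_def g_def using fP by auto
    moreover have "f j \<in> Vv" unfolding Vv_def using fP by auto
    moreover have "f = ext g"
    proof
      fix x show "f x = ext g x"
        using fP(1,3) unfolding ext_def g_def
        by (cases "x \<le> j"; cases "x = Suc j") (auto simp: PiE_def extensional_def)
    qed
    ultimately show "f \<in> (\<Union>w\<in>Vv. ext ` S w)" by blast
  next
    fix f assume "f \<in> (\<Union>w\<in>Vv. ext ` S w)"
    then obtain w g where w: "w \<in> Vv" and g: "g \<in> S w" and fg: "f = ext g" by blast
    have gP: "g \<in> {..j} \<rightarrow>\<^sub>E V" "g 0 = u" "g j = w" "\<forall>i<j. {g i, g (Suc i)} \<in> E" "P g"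
      using g by (auto simp: S_def Pth_def)
    have vV: "v \<in> V" using w EV unfolding Vv_def by auto
    have r: "restrict f {..j} = g"
      using gP(1) unfolding fg ext_def by (auto simp: restrict_def PiE_def extensional_def)
    have "f \<in> {..Suc j} \<rightarrow>\<^sub>E V" using gP(1) vV unfolding fg ext_def by (auto simp: PiE_def extensional_def Pi_def le_Suc_eq)
    moreover have "\<forall>i<Suc j. {f i, f (Suc i)} \<in> E"
    proof (intro allI impI)
      fix i assume "i < Suc j"
      then consider "i < j" | "i = j" by linarith
      then show "{f i, f (Suc i)} \<in> E"
        by cases (use gP w in \<open>auto simp: fg ext_def Vv_def\<close>)
    qed
    ultimately show "f \<in> {f \<in> Pth E V (Suc j) u v. P (restrict f {..j})}"
      using gP r unfolding Pth_def by (auto simp: fg ext_def)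
  qed
  have fin: "finite Vv" unfolding Vv_def using finV by auto
  have finS: "finite (S w)" for w unfolding S_def using finite_Pth by auto
  have inj: "inj_on ext (S w)" for w
  proof
    fix g h assume "g \<in> S w" "h \<in> S w" "ext g = ext h"
    hence gh: "g \<in> {..j} \<rightarrow>\<^sub>E V" "h \<in> {..j} \<rightarrow>\<^sub>E V" and e: "g(Suc j := v) = h(Suc j := v)"
      unfolding S_def Pth_def ext_def by auto
    have ne: "g x = h x" if "x \<noteq> Suc j" for x using fun_cong[OF e, of x] that by simp
    show "g = h"
    proof
      fix x show "g x = h x"
        using ne[of x] gh by (cases "x = Suc j") (auto simp: PiE_def extensional_def)
    qed
  qed
  have disj: "ext ` S w \<inter> ext ` S w' = {}" if "w \<noteq> w'" for w w'
  proof -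
    have "ext g j = g j" for g unfolding ext_def by simp
    thus ?thesis using that unfolding S_def Pth_def by (auto dest!: fun_cong[of _ _ j])
  qed
  have "card (\<Union>w\<in>Vv. ext ` S w) = (\<Sum>w\<in>Vv. card (ext ` S w))"
    by (rule card_UN_disjoint) (use fin finS disj in auto)
  also have "\<dots> = (\<Sum>w\<in>Vv. card (S w))" using inj by (simp add: card_image)
  finally have "real (card {f \<in> Pth E V (Suc j) u v. P (restrict f {..j})}) = (\<Sum>w\<in>Vv. real (card (S w)))"
    using eq by simp
  also have "\<dots> = (\<Sum>w\<in>V. real (card (S w)) * adj E w v)"
    unfolding Vv_def adj_def using finV by (simp add: sum.inter_filter[symmetric] if_distrib cong: if_cong)
  finally show ?thesis unfolding S_def .
qed

lemma Pth_in: "f \<in> Pth E V j u v \<Longrightarrow> i \<le> j \<Longrightarrow> f i \<in> V"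
  unfolding Pth_def by auto

lemma Pth_out: "u \<notin> V \<or> v \<notin> V \<Longrightarrow> Pth E V j u v = {}"
  unfolding Pth_def by auto

lemma W_out: "u \<notin> V \<or> v \<notin> V \<Longrightarrow> W E V j u v = 0"
  using Pth_out by (simp add: W_def)

lemma W0: "W E V 0 u v = (if u = v \<and> u \<in> V then 1 else 0)"
proof (cases "u = v \<and> u \<in> V")
  case True
  hence uv: "v = u" "u \<in> V" by auto
  have "Pth E V 0 u u = {(\<lambda>i. if i = 0 then u else undefined)}"
    using uv unfolding Pth_def by (auto simp: PiE_def extensional_def)
  thus ?thesis using uv by (simp add: W_def)
next
  case False
  hence "Pth E V 0 u v = {}" unfolding Pth_def by auto
  thus ?thesis using False by (simp add: W_def)
qed

lemma Wrec: "W E V (Suc j) u v = (\<Sum>w\<in>V. W E V j u w * adj E w v)"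
  using core[of j u v "\<lambda>_. True"] by (simp add: W_def)

lemma L1: "i \<le> n \<Longrightarrow> real (card {f \<in> Pth E V n u v. f i = x}) = W E V i u x * W E V (n - i) x v"
proof (induction n arbitrary: v rule: dec_induct)
  case base
  show ?case
  proof (cases "x = v")
    case True
    hence "{f \<in> Pth E V i u v. f i = x} = Pth E V i u v" unfolding Pth_def by auto
    hence "real (card {f \<in> Pth E V i u v. f i = x}) = W E V i u v" by (simp add: W_def)
    thus ?thesis using True W_out[of u v i] by (auto simp: W0)
  next
    case False
    hence e: "{f \<in> Pth E V i u v. f i = x} = {}" unfolding Pth_def by auto
    show ?thesis using False by (simp add: e W0)
  qed
next
  case (step n)
  have "{f \<in> Pth E V (Suc n) u v. f i = x} = {f \<in> Pth E V (Suc n) u v. (\<lambda>g. g i = x) (restrict f {..n})}"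
    using step(1) by auto
  hence "real (card {f \<in> Pth E V (Suc n) u v. f i = x}) = (\<Sum>w\<in>V. real (card {g \<in> Pth E V n u w. g i = x}) * adj E w v)"
    using core[of n u v "\<lambda>g. g i = x"] by simp
  also have "\<dots> = (\<Sum>w\<in>V. W E V i u x * W E V (n - i) x w * adj E w v)"
    using step(3) by simp
  also have "\<dots> = W E V i u x * W E V (Suc (n - i)) x v"
    by (simp add: Wrec sum_distrib_left mult.assoc)
  finally show ?case using step(1) by (simp add: Suc_diff_le)
qed

lemma L2: assumes ij: "i \<le> j" shows "j \<le> n \<Longrightarrow>
  real (card {f \<in> Pth E V n u v. f i = x \<and> f j = y}) = W E V i u x * W E V (j - i) x y * W E V (n - j) y v"
proof (induction n arbitrary: v rule: dec_induct)
  case base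
  show ?case
  proof (cases "y = v")
    case True
    hence "{f \<in> Pth E V j u v. f i = x \<and> f j = y} = {f \<in> Pth E V j u v. f i = x}" unfolding Pth_def by auto
    thus ?thesis using True L1[of i j u v x] ij W_out[of x v "j - i"] by (auto simp: W0)
  next
    case False
    hence e: "{f \<in> Pth E V j u v. f i = x \<and> f j = y} = {}" unfolding Pth_def by auto
    show ?thesis using False by (simp add: e W0)
  qed
next
  case (step n)
  have "{f \<in> Pth E V (Suc n) u v. f i = x \<and> f j = y} =
        {f \<in> Pth E V (Suc n) u v. (\<lambda>g. g i = x \<and> g j = y) (restrict f {..n})}"
    using step(1) ij by auto
  hence "real (card {f \<in> Pth E V (Suc n) u v. f i = x \<and> f j = y}) =
     (\<Sum>w\<in>V. real (card {g \<in> Pth E V n u w. g i = x \<and> g j = y}) * adj E w v)"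
    using core[of n u v "\<lambda>g. g i = x \<and> g j = y"] by simp
  also have "\<dots> = (\<Sum>w\<in>V. W E V i u x * W E V (j - i) x y * W E V (n - j) y w * adj E w v)"
    using step by simp
  also have "\<dots> = W E V i u x * W E V (j - i) x y * W E V (Suc (n - j)) y v"
    by (simp add: Wrec sum_distrib_left mult.assoc)
  finally show ?case using step(1) by (simp add: Suc_diff_le)
qed

lemma comp: "W E V (i + j) u v = (\<Sum>w\<in>V. W E V i u w * W E V j w v)"
proof -
  have eq: "Pth E V (i + j) u v = (\<Union>w\<in>V. {f \<in> Pth E V (i + j) u v. f i = w})"
    using Pth_in[of _ "i+j" u v i] by auto
  have "card (Pth E V (i + j) u v) = (\<Sum>w\<in>V. card {f \<in> Pth E V (i + j) u v. f i = w})"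
    by (subst eq, rule card_UN_disjoint) (use finV finite_Pth in auto)
  hence "W E V (i + j) u v = (\<Sum>w\<in>V. real (card {f \<in> Pth E V (i + j) u v. f i = w}))"
    by (simp add: W_def)
  also have "\<dots> = (\<Sum>w\<in>V. W E V i u w * W E V j w v)"
    by (rule sum.cong) (auto simp: L1)
  finally show ?thesis .
qed

lemma W1: "W E V (Suc 0) u v = (if u \<in> V then adj E u v else 0)"
proof -
  have "W E V (Suc 0) u v = (\<Sum>w\<in>V. (if w = u \<and> u \<in> V then adj E w v else 0))"
    using Wrec[of 0 u v] by (simp add: W0 eq_commute[of u]) (intro sum.cong, auto)
  also have "\<dots> = (if u \<in> V then adj E u v else 0)"
    using finV by (cases "u \<in> V") (simp_all add: sum.delta')
  finally show ?thesis .
qed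

lemma Wrec_left: "W E V (Suc j) u v = (if u \<in> V then (\<Sum>w\<in>V. adj E u w * W E V j w v) else 0)"
  using comp[of 1 j u v] by (simp add: W1)

lemma W_sym: "W E V j u v = W E V j v u"
proof (induction j arbitrary: u v)
  case 0 then show ?case by (auto simp: W0)
next
  case (Suc j)
  show ?case
  proof (cases "v \<in> V")
    case True
    have "W E V (Suc j) u v = (\<Sum>w\<in>V. W E V j w u * adj E v w)"
      by (simp add: Wrec Suc adj_sym)
    also have "\<dots> = W E V (Suc j) v u" using True by (simp add: Wrec_left mult.commute)
    finally show ?thesis .
  next
    case False thus ?thesis by (simp add: W_out)
  qed
qed

lemma sq_form: "W E V (j + j) x x = (\<Sum>y\<in>V. (W E V j x y)^2)"
  by (simp add: comp power2_eq_square W_sym[of j _ x])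

lemma lc_vertex:
  assumes "1 \<le> j"
  shows "(W E V (j + j) x x)^2 \<le> W E V ((j-1) + (j-1)) x x * W E V ((j+1) + (j+1)) x x"
proof -
  have "j + j = (j - 1) + (j + 1)" using assms by simp
  hence "W E V (j + j) x x = W E V ((j - 1) + (j + 1)) x x" by simp
  also have "\<dots> = (\<Sum>y\<in>V. W E V (j-1) x y * W E V (j+1) y x)" by (rule comp)
  also have "\<dots> = (\<Sum>y\<in>V. W E V (j-1) x y * W E V (j+1) x y)"
    by (intro sum.cong refl) (metis W_sym)
  finally have "W E V (j + j) x x = (\<Sum>y\<in>V. W E V (j-1) x y * W E V (j+1) x y)" .
  hence "(W E V (j + j) x x)^2 \<le> (\<Sum>y\<in>V. (W E V (j-1) x y)^2) * (\<Sum>y\<in>V. (W E V (j+1) x y)^2)"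
    using Cauchy_Schwarz_ineq_sum by simp
  thus ?thesis by (simp only: sq_form)
qed

definition deg :: "'a \<Rightarrow> real" where "deg x = (\<Sum>y\<in>V. adj E x y)"

lemma adj01: "adj E x y = 0 \<or> adj E x y = 1" by (simp add: adj_def)

lemma deg_nonneg: "deg x \<ge> 0" unfolding deg_def adj_def by (simp add: sum_nonneg)

lemma W2: "x \<in> V \<Longrightarrow> W E V (1 + 1) x x = deg x"
  unfolding sq_form deg_def by (intro sum.cong) (auto simp: W1 adj_def)

lemma W_iso: assumes "deg x = 0" shows "W E V (Suc j) x y = 0"
proof -
  have "\<forall>w\<in>V. adj E x w = 0"
    using assms finV unfolding deg_def adj_def by (subst (asm) sum_nonneg_eq_0_iff) auto
  thus ?thesis by (simp add: Wrec_left)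
qed

definition F :: "'a set \<Rightarrow> nat \<Rightarrow> 'a \<Rightarrow> real" where "F A j y = (\<Sum>x\<in>A. W E V j x y)"
definition S :: "'a set \<Rightarrow> nat \<Rightarrow> real" where "S A j = (\<Sum>y\<in>V. (F A j y)^2)"

lemma FF: "(\<Sum>y\<in>V. F A a y * F A b y) = (\<Sum>x\<in>A. \<Sum>x'\<in>A. W E V (a + b) x x')"
proof -
  have "(\<Sum>y\<in>V. F A a y * F A b y) = (\<Sum>y\<in>V. \<Sum>x\<in>A. \<Sum>x'\<in>A. W E V a x y * W E V b x' y)"
    unfolding F_def by (simp add: sum_product)
  also have "\<dots> = (\<Sum>x\<in>A. \<Sum>x'\<in>A. \<Sum>y\<in>V. W E V a x y * W E V b y x')"
    by (simp add: sum.swap[of _ V] sum.swap[of _ V A] W_sym[of b _ ])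
  also have "\<dots> = (\<Sum>x\<in>A. \<Sum>x'\<in>A. W E V (a + b) x x')" by (simp add: comp)
  finally show ?thesis .
qed

lemma lc_global:
  assumes "1 \<le> j"
  shows "(S A j)^2 \<le> S A (j-1) * S A (j+1)"
proof -
  have "S A j = (\<Sum>y\<in>V. F A j y * F A j y)" by (simp add: S_def power2_eq_square)
  also have "\<dots> = (\<Sum>y\<in>V. F A (j-1) y * F A (j+1) y)"
    using assms by (simp only: FF) simp
  finally have "(S A j)^2 \<le> (\<Sum>y\<in>V. (F A (j-1) y)^2) * (\<Sum>y\<in>V. (F A (j+1) y)^2)"
    using Cauchy_Schwarz_ineq_sum by simp
  thus ?thesis by (simp add: S_def)
qed

lemma S0: assumes "A \<subseteq> V" shows "S A 0 = real (card A)"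
proof -
  have "F A 0 y = (if y \<in> A then 1 else 0)" if "y \<in> V" for y
  proof -
    have "F A 0 y = (\<Sum>x\<in>A. if y = x then 1 else 0)"
      unfolding F_def W0 using assms that by (intro sum.cong) auto
    thus ?thesis using finite_subset[OF assms finV] by (simp add: sum.delta)
  qed
  hence "S A 0 = (\<Sum>y\<in>V. if y \<in> A then 1 else 0)" unfolding S_def by (intro sum.cong) auto
  also have "\<dots> = real (card A)" using assms finV by (simp add: sum.If_cases Int_absorb1)
  finally show ?thesis .
qed

lemma S_upper: assumes "A \<subseteq> V" shows "S A j \<le> real (card A) * (\<Sum>x\<in>A. W E V (j + j) x x)"
proof -
  have "S A j \<le> (\<Sum>y\<in>V. (\<Sum>x\<in>A. (W E V j x y)^2) * real (card A))"
    unfolding S_def F_def by (intro sum_mono sum_squared_le_sum_of_squares)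
  also have "\<dots> = real (card A) * (\<Sum>x\<in>A. \<Sum>y\<in>V. (W E V j x y)^2)"
    by (simp add: sum_distrib_left sum.swap[of _ V] mult.commute)
  also have "\<dots> = real (card A) * (\<Sum>x\<in>A. W E V (j + j) x x)" by (simp add: sq_form)
  finally show ?thesis .
qed

lemma degenerate:
  fixes n :: nat
  defines "P \<equiv> {(i, j). i < j \<and> j < n}"
  shows "(\<Sum>v\<in>V. real (card {f \<in> Pth E V n v v. \<not> inj_on f {..<n}}))
     \<le> (\<Sum>(i, j)\<in>P. \<Sum>x\<in>V. W E V (j - i) x x * W E V (n - (j - i)) x x)"
proof -
  have finP: "finite P" unfolding P_def
    by (rule finite_subset[of _ "{..<n} \<times> {..<n}"]) auto
  have one: "real (card {f \<in> Pth E V n v v. \<not> inj_on f {..<n}})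
     \<le> (\<Sum>(i, j)\<in>P. \<Sum>x\<in>V. W E V i v x * W E V (j - i) x x * W E V (n - j) x v)" for v
  proof -
    have sub: "{f \<in> Pth E V n v v. \<not> inj_on f {..<n}} \<subseteq>
      (\<Union>ij\<in>P. \<Union>x\<in>V. {f \<in> Pth E V n v v. f (fst ij) = x \<and> f (snd ij) = x})"
    proof
      fix f assume f: "f \<in> {f \<in> Pth E V n v v. \<not> inj_on f {..<n}}"
      then obtain i j where ij: "i < n" "j < n" "i \<noteq> j" "f i = f j"
        unfolding inj_on_def by auto
      define i' j' where "i' = min i j" and "j' = max i j"
      have "(i', j') \<in> P" using ij unfolding P_def i'_def j'_def by auto
      moreover have "f i' = f j'" using ij unfolding i'_def j'_def by (auto simp: min_def max_def)
      moreover have "f i' \<in> V" using f ij Pth_in[of f n v v i'] unfolding i'_def by auto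
      ultimately show "f \<in> (\<Union>ij\<in>P. \<Union>x\<in>V. {f \<in> Pth E V n v v. f (fst ij) = x \<and> f (snd ij) = x})"
        using f by (intro UN_I[of "(i', j')"]) auto
    qed
    have "card {f \<in> Pth E V n v v. \<not> inj_on f {..<n}} \<le>
      card (\<Union>ij\<in>P. \<Union>x\<in>V. {f \<in> Pth E V n v v. f (fst ij) = x \<and> f (snd ij) = x})"
      by (rule card_mono[OF _ sub]) (use finP finV finite_Pth in auto)
    also have "\<dots> \<le> (\<Sum>ij\<in>P. card (\<Union>x\<in>V. {f \<in> Pth E V n v v. f (fst ij) = x \<and> f (snd ij) = x}))"
      by (rule card_UN_le[OF finP])
    also have "\<dots> \<le> (\<Sum>ij\<in>P. \<Sum>x\<in>V. card {f \<in> Pth E V n v v. f (fst ij) = x \<and> f (snd ij) = x})"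
      by (intro sum_mono card_UN_le finV)
    finally have "real (card {f \<in> Pth E V n v v. \<not> inj_on f {..<n}}) \<le>
      real (\<Sum>ij\<in>P. \<Sum>x\<in>V. card {f \<in> Pth E V n v v. f (fst ij) = x \<and> f (snd ij) = x})"
      by (rule of_nat_mono)
    hence "real (card {f \<in> Pth E V n v v. \<not> inj_on f {..<n}}) \<le>
      (\<Sum>ij\<in>P. \<Sum>x\<in>V. real (card {f \<in> Pth E V n v v. f (fst ij) = x \<and> f (snd ij) = x}))"
      by (simp add: of_nat_sum)
    also have "\<dots> = (\<Sum>(i, j)\<in>P. \<Sum>x\<in>V. W E V i v x * W E V (j - i) x x * W E V (n - j) x v)"
      by (intro sum.cong refl) (auto simp: P_def L2)
    finally show ?thesis .
  qed
  have "(\<Sum>v\<in>V. real (card {f \<in> Pth E V n v v. \<not> inj_on f {..<n}}))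
     \<le> (\<Sum>v\<in>V. \<Sum>(i, j)\<in>P. \<Sum>x\<in>V. W E V i v x * W E V (j - i) x x * W E V (n - j) x v)"
    by (intro sum_mono one)
  also have "\<dots> = (\<Sum>(i, j)\<in>P. \<Sum>v\<in>V. \<Sum>x\<in>V. W E V i v x * W E V (j - i) x x * W E V (n - j) x v)"
    unfolding case_prod_beta by (rule sum.swap)
  also have "\<dots> = (\<Sum>(i, j)\<in>P. \<Sum>x\<in>V. \<Sum>v\<in>V. W E V i v x * W E V (j - i) x x * W E V (n - j) x v)"
    by (intro sum.cong refl, clarify, rule sum.swap)
  also have "\<dots> = (\<Sum>(i, j)\<in>P. \<Sum>x\<in>V. W E V (j - i) x x * (\<Sum>v\<in>V. W E V (n - j) x v * W E V i v x))"
    by (intro sum.cong refl, clarify) (simp add: sum_distrib_left mult_ac)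
  also have "\<dots> = (\<Sum>(i, j)\<in>P. \<Sum>x\<in>V. W E V (j - i) x x * W E V (n - (j - i)) x x)"
  proof -
    have key: "(\<Sum>v\<in>V. W E V (n - j) x v * W E V i v x) = W E V (n - (j - i)) x x" if "(i, j) \<in> P" for i j x
    proof -
      have "n - (j - i) = (n - j) + i" using that unfolding P_def by auto
      thus ?thesis by (simp add: comp)
    qed
    show ?thesis by (intro sum.cong refl, clarify) (simp add: key)
  qed
  finally show ?thesis .
qed

lemma finE: "finite E"
  by (rule finite_subset[of _ "Pow V"]) (use EV finV in auto)

lemma fiber:
  assumes n0: "0 < n"
  shows "(\<Sum>v\<in>V. real (card {f \<in> Pth E V n v v. inj_on f {..<n}})) \<le> real n ^ n * real (card (cycle_copies n E))"
proof -
  define U where "U = (\<Union>v\<in>V. {f \<in> Pth E V n v v. inj_on f {..<n}})"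
  define C where "C = cycle_copies n E"
  have finC: "finite C" unfolding C_def cycle_copies_def
    by (rule finite_subset[of _ "Pow E"]) (use finE in auto)
  have finU: "finite U" unfolding U_def using finV finite_Pth by auto
  have cardU: "card U = (\<Sum>v\<in>V. card {f \<in> Pth E V n v v. inj_on f {..<n}})"
  proof -
    have fin1: "finite {f \<in> Pth E V n v v. inj_on f {..<n}}" for v using finite_Pth by simp
    show ?thesis unfolding U_def
      by (rule card_UN_disjoint) (use finV fin1 in \<open>auto simp: Pth_def\<close>)
  qed
  have Uprop: "f \<in> {..n} \<rightarrow>\<^sub>E V \<and> f n = f 0 \<and> inj_on f {..<n} \<and> (\<forall>i<n. {f i, f ((i+1) mod n)} \<in> E)"
    if fU: "f \<in> U" for f
  proof -
    obtain v where f: "f \<in> Pth E V n v v" "inj_on f {..<n}" using fU unfolding U_def by blast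
    have "{f i, f ((i+1) mod n)} \<in> E" if "i < n" for i
    proof (cases "Suc i < n")
      case True thus ?thesis using f that by (simp add: Pth_def)
    next
      case False
      hence "Suc i = n" using that by simp
      hence "(i + 1) mod n = 0" by simp
      have "{f i, f (Suc i)} \<in> E" using f(1) that unfolding Pth_def by blast
      moreover have "f (Suc i) = f 0" using f(1) \<open>Suc i = n\<close> unfolding Pth_def by simp
      ultimately show ?thesis using \<open>(i + 1) mod n = 0\<close> by simp
    qed
    moreover have "f \<in> {..n} \<rightarrow>\<^sub>E V" "f n = f 0" using f(1) unfolding Pth_def by auto
    ultimately show ?thesis using f(2) by blast
  qed
  have inC: "cycle_edges n f \<in> C" if "f \<in> U" for f
  proof -
    have "cycle_edges n f \<subseteq> E" using Uprop[OF that] unfolding cycle_edges_def by blast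
    moreover have "inj_on f {..<n}" using Uprop[OF that] by blast
    ultimately show ?thesis unfolding C_def cycle_copies_def by blast
  qed
  have fibre: "card {f \<in> U. cycle_edges n f = H} \<le> n ^ n" for H
  proof (cases "{f \<in> U. cycle_edges n f = H} = {}")
    case True show ?thesis by (subst True) simp
  next
    case False
    then obtain f0 where f0: "f0 \<in> U" "cycle_edges n f0 = H" by auto
    have HS: "\<Union>H \<subseteq> f0 ` {..<n}"
    proof
      fix z assume "z \<in> \<Union>H"
      then obtain i where i: "i < n" "z \<in> {f0 i, f0 ((i+1) mod n)}"
        using f0(2) unfolding cycle_edges_def by blast
      moreover have "(i+1) mod n < n" using n0 by simp
      ultimately show "z \<in> f0 ` {..<n}" by blast
    qed
    have cardS: "card (\<Union>H) \<le> n"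
    proof -
      have "card (\<Union>H) \<le> card (f0 ` {..<n})" by (rule card_mono) (simp_all add: HS)
      also have "\<dots> \<le> card {..<n}" by (rule card_image_le) simp
      finally show ?thesis by simp
    qed
    have "inj_on (\<lambda>f. restrict f {..<n}) {f \<in> U. cycle_edges n f = H}"
    proof (rule inj_onI)
      fix f g assume f: "f \<in> {f \<in> U. cycle_edges n f = H}" and g: "g \<in> {f \<in> U. cycle_edges n f = H}"
        and e: "restrict f {..<n} = restrict g {..<n}"
      have fU: "f \<in> U" and gU: "g \<in> U" using f g by auto
      have fp: "f \<in> {..n} \<rightarrow>\<^sub>E V" "f n = f 0" using Uprop[OF fU] by auto
      have gp: "g \<in> {..n} \<rightarrow>\<^sub>E V" "g n = g 0" using Uprop[OF gU] by auto
      have lt: "f x = g x" if "x < n" for x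
      proof -
        have "restrict f {..<n} x = restrict g {..<n} x" using e by (rule fun_cong)
        thus ?thesis using that by (simp add: restrict_def)
      qed
      show "f = g"
      proof (rule ext)
        fix x
        consider "x < n" | "x = n" | "n < x" by linarith
        then show "f x = g x"
        proof cases
          case 1 then show ?thesis by (rule lt)
        next
          case 2
          have "f 0 = g 0" using lt n0 by blast
          then show ?thesis using 2 fp(2) gp(2) by simp
        next
          case 3
          hence "x \<notin> {..n}" by simp
          then show ?thesis using PiE_arb[OF fp(1)] PiE_arb[OF gp(1)] by simp
        qed
      qed
    qed
    moreover have "(\<lambda>f. restrict f {..<n}) ` {f \<in> U. cycle_edges n f = H} \<subseteq> {..<n} \<rightarrow>\<^sub>E \<Union>H"
    proof clarify
      fix f assume f: "f \<in> U" "H = cycle_edges n f"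
      show "restrict f {..<n} \<in> {..<n} \<rightarrow>\<^sub>E \<Union>(cycle_edges n f)"
      proof -
        have "\<forall>i\<in>{..<n}. f i \<in> \<Union>(cycle_edges n f)" unfolding cycle_edges_def by blast
        thus ?thesis by (simp only: restrict_PiE_iff)
      qed
    qed
    moreover have "finite (\<Union>H)" by (rule finite_subset[OF HS]) simp
    ultimately have "card {f \<in> U. cycle_edges n f = H} \<le> card ({..<n} \<rightarrow>\<^sub>E \<Union>H)"
      by (intro card_inj_on_le) (auto simp: finite_PiE)
    also have "\<dots> = card (\<Union>H) ^ n" by (simp add: card_PiE)
    also have "\<dots> \<le> n ^ n" by (rule power_mono[OF cardS]) simp
    finally show ?thesis .
  qed
  have "U \<subseteq> (\<Union>H\<in>C. {f \<in> U. cycle_edges n f = H})" using inC by auto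
  hence "card U \<le> card (\<Union>H\<in>C. {f \<in> U. cycle_edges n f = H})"
    by (intro card_mono) (use finC finU in auto)
  also have "\<dots> \<le> (\<Sum>H\<in>C. card {f \<in> U. cycle_edges n f = H})" by (rule card_UN_le[OF finC])
  also have "\<dots> \<le> (\<Sum>H\<in>C. n ^ n)" by (intro sum_mono fibre)
  also have "\<dots> = n ^ n * card C" by simp
  finally have "real (card U) \<le> real (n ^ n * card C)" by (rule of_nat_mono)
  thus ?thesis using cardU by (simp add: C_def of_nat_sum)
qed

end


lemma chain_mono:
  fixes g :: "nat \<Rightarrow> real"
  assumes "\<And>i. a \<le> i \<Longrightarrow> i < b \<Longrightarrow> g i \<le> g (Suc i)"
  shows "a \<le> i \<Longrightarrow> i \<le> j \<Longrightarrow> j \<le> b \<Longrightarrow> g i \<le> g j"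
proof (induction j rule: nat.induct)
  case zero thus ?case by simp
next
  case (Suc j)
  show ?case
  proof (cases "i \<le> j")
    case True
    hence "g i \<le> g j" using Suc by simp
    also have "g j \<le> g (Suc j)" using assms Suc True by simp
    finally show ?thesis .
  next
    case False thus ?thesis using Suc by (simp add: le_Suc_eq)
  qed
qed

lemma lc_pos:
  fixes s :: "nat \<Rightarrow> real"
  assumes s0: "s 0 > 0" and s1: "s 1 > 0"
    and lc: "\<And>j. 1 \<le> j \<Longrightarrow> j < k \<Longrightarrow> (s j)^2 \<le> s (j-1) * s (j+1)"
  shows "j \<le> k \<Longrightarrow> s j > 0"
proof -
  have P: "s i > 0 \<and> s (Suc i) > 0" if "i = 0 \<or> i < k" for i
    using that
  proof (induction i)
    case 0 thus ?case using s0 s1 by simp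
  next
    case (Suc i)
    hence IH: "s i > 0" "s (Suc i) > 0" by auto
    have "(s (Suc i))^2 \<le> s i * s (Suc (Suc i))" using lc[of "Suc i"] Suc by simp
    moreover have "(s (Suc i))^2 > 0" using IH by simp
    ultimately have "s i * s (Suc (Suc i)) > 0" by linarith
    hence "s (Suc (Suc i)) > 0" using IH zero_less_mult_pos by blast
    thus ?case using IH by simp
  qed
  assume "j \<le> k"
  show "s j > 0"
  proof (cases j)
    case 0 thus ?thesis using s0 by simp
  next
    case (Suc i)
    thus ?thesis using P[of i] \<open>j \<le> k\<close> by auto
  qed
qed

lemma lc_ratio_mono:
  fixes s :: "nat \<Rightarrow> real"
  assumes pos: "\<And>j. j \<le> k \<Longrightarrow> s j > 0"
    and lc: "\<And>j. 1 \<le> j \<Longrightarrow> j < k \<Longrightarrow> (s j)^2 \<le> s (j-1) * s (j+1)"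
  shows "a \<le> b \<Longrightarrow> b < k \<Longrightarrow> s (Suc a) / s a \<le> s (Suc b) / s b"
proof -
  have step: "s (Suc i) / s i \<le> s (Suc (Suc i)) / s (Suc i)" if "i < k - 1" for i
  proof -
    have p: "s i > 0" "s (Suc i) > 0" "s (Suc (Suc i)) > 0" using pos that by auto
    have "s (Suc i) * s (Suc i) \<le> s i * s (Suc (Suc i))"
      using lc[of "Suc i"] that by (simp add: power2_eq_square)
    thus ?thesis using p by (simp add: divide_simps mult.commute)
  qed
  assume "a \<le> b" "b < k"
  thus ?thesis
    using chain_mono[of 0 "k - 1" "\<lambda>i. s (Suc i) / s i" a b] step by auto
qed

lemma lc_lower:
  fixes s :: "nat \<Rightarrow> real"
  assumes s0: "s 0 > 0" and s1: "s 1 > 0"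
    and lc: "\<And>j. 1 \<le> j \<Longrightarrow> j < k \<Longrightarrow> (s j)^2 \<le> s (j-1) * s (j+1)"
  shows "j \<le> k \<Longrightarrow> s j \<ge> s 0 * (s 1 / s 0)^j"
proof (induction j)
  case 0 thus ?case by simp
next
  case (Suc j)
  have pos: "\<And>i. i \<le> k \<Longrightarrow> s i > 0" using lc_pos[OF s0 s1 lc] by blast
  have r: "s 1 / s 0 \<le> s (Suc j) / s j"
    using lc_ratio_mono[OF pos lc, where a=0 and b=j] Suc.prems by simp
  have "s 0 * (s 1 / s 0) ^ Suc j = (s 1 / s 0) * (s 0 * (s 1 / s 0) ^ j)" by simp
  also have "\<dots> \<le> (s (Suc j) / s j) * s j"
    using r Suc s0 s1 pos[of j] pos[of "Suc j"] by (intro mult_mono) auto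
  also have "\<dots> = s (Suc j)" using pos[of j] Suc by simp
  finally show ?case .
qed

lemma lc_jump:
  fixes s :: "nat \<Rightarrow> real" and \<mu> :: real
  assumes pos: "\<And>j. j \<le> k \<Longrightarrow> s j > 0" and s0: "s 0 = 1"
    and lc: "\<And>j. 1 \<le> j \<Longrightarrow> j < k \<Longrightarrow> (s j)^2 \<le> s (j-1) * s (j+1)"
    and pq: "p + q = k" "1 \<le> p" "1 \<le> q" and mu: "\<mu> \<ge> 1"
  shows "s p * s q \<le> \<mu>^(k*k) * (s 1)^k + s k / \<mu>"
proof -
  define r where "r j = s (Suc j) / s j" for j
  have rpos: "r j > 0" if "j < k" for j using pos[of j] pos[of "Suc j"] that by (simp add: r_def)
  have rmono: "r a \<le> r b" if "a \<le> b" "b < k" for a b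
    using lc_ratio_mono[OF pos lc that] by (simp add: r_def)
  have sr: "s (Suc j) = r j * s j" if "j < k" for j using pos[of j] that by (simp add: r_def)
  have nn: "0 \<le> \<mu>^(k*k) * (s 1)^k" "0 \<le> s k / \<mu>" using pos[of 1] pos[of k] mu pq by auto
  show ?thesis
  proof (cases "\<forall>j. 1 \<le> j \<longrightarrow> j < k \<longrightarrow> r j \<le> \<mu> * r (j-1)")
    case True
    have r1: "r j \<le> \<mu>^j * r 0" if "j < k" for j
      using that
    proof (induction j)
      case 0 thus ?case by simp
    next
      case (Suc j)
      have "r (Suc j) \<le> \<mu> * r j" using True Suc by fastforce
      also have "\<dots> \<le> \<mu> * (\<mu>^j * r 0)" using Suc mu by simp
      finally show ?case by simp
    qed
    have r2: "r j \<le> \<mu>^k * r 0" if "j < k" for j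
    proof -
      have "\<mu>^j \<le> \<mu>^k" using mu that by (simp add: power_increasing)
      hence "\<mu>^j * r 0 \<le> \<mu>^k * r 0" using rpos[of 0] that by simp
      thus ?thesis using r1[OF that] by simp
    qed
    have s2: "s j \<le> (\<mu>^k * r 0)^j" if "j \<le> k" for j
      using that
    proof (induction j)
      case 0 thus ?case using s0 by simp
    next
      case (Suc j)
      have "s (Suc j) = r j * s j" using sr Suc by simp
      also have "\<dots> \<le> (\<mu>^k * r 0) * (\<mu>^k * r 0)^j"
        using r2[of j] Suc pos[of j] rpos[of j] by (intro mult_mono) auto
      finally show ?case by simp
    qed
    have "s p * s q \<le> (\<mu>^k * r 0)^p * (\<mu>^k * r 0)^q"
      using s2[of p] s2[of q] pq pos[of p] pos[of q] by (intro mult_mono) auto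
    also have "\<dots> = (\<mu>^k * r 0)^k" using pq by (simp add: power_add[symmetric])
    also have "\<dots> = \<mu>^(k*k) * (s 1)^k" by (simp add: r_def s0 power_mult_distrib power_mult)
    finally show ?thesis using nn by linarith
  next
    case False
    then obtain j where j: "1 \<le> j" "j < k" "r j > \<mu> * r (j-1)" by auto
    define g where "g i = s (q + i) / s i" for i
    have gstep: "g (Suc i) = g i * (r (q + i) / r i)" if "i < p" for i
      using that pq pos[of i] pos[of "q+i"] pos[of "Suc i"] pos[of "Suc (q+i)"]
      by (simp add: g_def r_def)
    have gmono: "g i \<le> g (Suc i)" if "0 \<le> i" "i < p" for i
    proof -
      have "r i \<le> r (q + i)" using rmono[of i "q+i"] that pq by simp
      hence "1 \<le> r (q + i) / r i" using rpos[of i] that pq by simp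
      moreover have "g i > 0" using pos[of i] pos[of "q+i"] that pq by (simp add: g_def)
      ultimately show ?thesis using gstep[OF that(2)]
        by (metis mult.right_neutral mult_left_mono order_less_le)
    qed
    define i0 where "i0 = min p j"
    have i0: "1 \<le> i0" "i0 \<le> p" "i0 \<le> j" "j + 1 \<le> q + i0" using j pq by (auto simp: i0_def)
    have "r (q + (i0 - 1)) \<ge> r j" using rmono[of j "q + (i0 - 1)"] i0 j pq by simp
    moreover have "r (i0 - 1) \<le> r (j - 1)" using rmono[of "i0-1" "j-1"] i0 j by simp
    ultimately have "r (q + (i0 - 1)) > \<mu> * r (i0 - 1)" using j(3) mu by (smt (verit) mult_left_mono)
    hence big: "r (q + (i0 - 1)) / r (i0 - 1) \<ge> \<mu>" using rpos[of "i0 - 1"] i0 pq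
      by (simp add: le_divide_eq)
    have g0: "g 0 = s q" using s0 by (simp add: g_def)
    have gpos: "g i > 0" if "i \<le> p" for i using pos[of i] pos[of "q+i"] that pq by (simp add: g_def)
    have "g (i0 - 1) \<ge> g 0" using chain_mono[of 0 p g 0 "i0 - 1"] gmono i0 by auto
    have "g i0 = g (i0 - 1) * (r (q + (i0 - 1)) / r (i0 - 1))"
      using gstep[of "i0 - 1"] i0 by simp
    also have "\<dots> \<ge> g (i0 - 1) * \<mu>"
      by (rule mult_left_mono[OF big]) (use gpos[of "i0 - 1"] i0 in \<open>simp add: less_imp_le\<close>)
    finally have "g i0 \<ge> \<mu> * g 0" using \<open>g (i0 - 1) \<ge> g 0\<close> mu by (smt (verit) mult_left_mono mult.commute)
    moreover have "g p \<ge> g i0" using chain_mono[of 0 p g i0 p] gmono i0 by auto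
    ultimately have "g p \<ge> \<mu> * s q" using g0 by simp
    hence "s k / s p \<ge> \<mu> * s q" using pq by (simp add: g_def add.commute)
    hence "s k \<ge> \<mu> * s q * s p" using pos[of p] pq by (simp add: le_divide_eq)
    hence "s p * s q \<le> s k / \<mu>" using mu by (simp add: le_divide_eq mult.commute mult.left_commute)
    thus ?thesis using nn by linarith
  qed
qed



locale bp = gr E V for E :: "'a set set" and V +
  fixes A B :: "'a set"
  assumes V_eq: "V = A \<union> B" and disj: "A \<inter> B = {}"
    and Eab: "\<And>e. e \<in> E \<Longrightarrow> \<exists>x\<in>A. \<exists>y\<in>B. e = {x, y}"
begin

lemma finA: "finite A" and finB: "finite B" using finV V_eq by auto

lemma edge_sides: "{x, y} \<in> E \<Longrightarrow> (x \<in> A \<and> y \<in> B) \<or> (x \<in> B \<and> y \<in> A)"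
proof -
  assume "{x, y} \<in> E"
  then obtain a b where ab: "a \<in> A" "b \<in> B" "{x, y} = {a, b}" using Eab by blast
  thus ?thesis by (auto simp: doubleton_eq_iff)
qed

lemma adj_sides: "adj E x y \<noteq> 0 \<Longrightarrow> (x \<in> A \<and> y \<in> B) \<or> (x \<in> B \<and> y \<in> A)"
  using edge_sides by (auto simp: adj_def split: if_splits)

lemma parity:
  assumes f: "f \<in> Pth E V r u v" and u: "u \<in> V"
  shows "i \<le> r \<Longrightarrow> (f i \<in> A) = ((u \<in> A) = even i)"
proof (induction i)
  case 0 thus ?case using f by (simp add: Pth_def)
next
  case (Suc i)
  have e: "{f i, f (Suc i)} \<in> E" using f Suc.prems by (simp add: Pth_def)
  have IH: "(f i \<in> A) = ((u \<in> A) = even i)" using Suc by simp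
  from edge_sides[OF e] have "(f (Suc i) \<in> A) = (f i \<notin> A)" using disj by blast
  thus ?case using IH by simp
qed

lemma W_odd: assumes "odd r" shows "W E V r x x = 0"
proof (cases "x \<in> V")
  case True
  have "Pth E V r x x = {}"
  proof (rule ccontr)
    assume "Pth E V r x x \<noteq> {}"
    then obtain f where f: "f \<in> Pth E V r x x" by blast
    have "(f r \<in> A) = ((x \<in> A) = even r)" using parity[OF f True] by simp
    moreover have "f r = x" using f by (simp add: Pth_def)
    ultimately show False using assms by simp
  qed
  thus ?thesis by (simp add: W_def)
next
  case False thus ?thesis by (simp add: W_out)
qed

lemma edges_count: "(\<Sum>x\<in>A. \<Sum>y\<in>B. adj E x y) = real (card E)"
proof -
  have "(\<Sum>x\<in>A. \<Sum>y\<in>B. adj E x y) = (\<Sum>p\<in>A \<times> B. adj E (fst p) (snd p))"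
    by (simp add: sum.cartesian_product case_prod_beta)
  also have "\<dots> = real (card {p \<in> A \<times> B. {fst p, snd p} \<in> E})"
    unfolding adj_def using finA finB by (simp add: sum.inter_filter[symmetric])
  also have "card {p \<in> A \<times> B. {fst p, snd p} \<in> E} = card E"
  proof (rule bij_betw_same_card[of "\<lambda>p. {fst p, snd p}"])
    show "bij_betw (\<lambda>p. {fst p, snd p}) {p \<in> A \<times> B. {fst p, snd p} \<in> E} E"
      unfolding bij_betw_def
    proof
      show "inj_on (\<lambda>p. {fst p, snd p}) {p \<in> A \<times> B. {fst p, snd p} \<in> E}"
        using disj by (auto simp: inj_on_def doubleton_eq_iff)
      show "(\<lambda>p. {fst p, snd p}) ` {p \<in> A \<times> B. {fst p, snd p} \<in> E} = E"
      proof
        show "(\<lambda>p. {fst p, snd p}) ` {p \<in> A \<times> B. {fst p, snd p} \<in> E} \<subseteq> E" by auto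
        show "E \<subseteq> (\<lambda>p. {fst p, snd p}) ` {p \<in> A \<times> B. {fst p, snd p} \<in> E}"
        proof
          fix e assume e: "e \<in> E"
          then obtain a b where ab: "a \<in> A" "b \<in> B" "e = {a, b}" using Eab by blast
          thus "e \<in> (\<lambda>p. {fst p, snd p}) ` {p \<in> A \<times> B. {fst p, snd p} \<in> E}"
            using e by (intro image_eqI[of _ _ "(a, b)"]) auto
        qed
      qed
    qed
  qed
  finally show ?thesis .
qed

lemma deg_A: "x \<in> A \<Longrightarrow> deg x = (\<Sum>y\<in>B. adj E x y)"
proof -
  assume x: "x \<in> A"
  have "deg x = (\<Sum>y\<in>A \<union> B. adj E x y)" by (simp add: deg_def V_eq[symmetric])
  also have "\<dots> = (\<Sum>y\<in>A. adj E x y) + (\<Sum>y\<in>B. adj E x y)"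
    using finA finB disj by (simp add: sum.union_disjoint)
  finally have "deg x = (\<Sum>y\<in>A. adj E x y) + (\<Sum>y\<in>B. adj E x y)" .
  moreover have "(\<Sum>y\<in>A. adj E x y) = 0"
    using adj_sides x disj by (intro sum.neutral) blast
  ultimately show ?thesis by simp
qed

lemma deg_B: "y \<in> B \<Longrightarrow> deg y = (\<Sum>x\<in>A. adj E y x)"
proof -
  assume y: "y \<in> B"
  have "deg y = (\<Sum>x\<in>A \<union> B. adj E y x)" by (simp add: deg_def V_eq[symmetric])
  also have "\<dots> = (\<Sum>x\<in>A. adj E y x) + (\<Sum>x\<in>B. adj E y x)"
    using finA finB disj by (simp add: sum.union_disjoint)
  finally have "deg y = (\<Sum>x\<in>A. adj E y x) + (\<Sum>x\<in>B. adj E y x)" .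
  moreover have "(\<Sum>x\<in>B. adj E y x) = 0"
    using adj_sides y disj by (intro sum.neutral) blast
  ultimately show ?thesis by simp
qed

lemma sum_deg_A: "(\<Sum>x\<in>A. deg x) = real (card E)"
  using edges_count by (simp add: deg_A)

lemma sum_deg_B: "(\<Sum>y\<in>B. deg y) = real (card E)"
  using edges_count by (simp add: deg_B sum.swap[of _ A B] adj_sym)

lemma AV: "A \<subseteq> V" and BV: "B \<subseteq> V" unfolding V_eq by simp_all

lemma card_pos:
  assumes "card E > 0" shows "card A > 0" "card B > 0"
proof -
  have "E \<noteq> {}" using assms by auto
  then obtain e where "e \<in> E" by blast
  then obtain x y where "x \<in> A" "y \<in> B" using Eab by blast
  hence "A \<noteq> {}" "B \<noteq> {}" by auto
  thus "card A > 0" "card B > 0" using finA finB by (simp_all add: card_gt_0_iff)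
qed

lemma F1_B: "y \<in> B \<Longrightarrow> F A 1 y = deg y"
proof -
  assume y: "y \<in> B"
  have "F A 1 y = (\<Sum>x\<in>A. adj E x y)"
    unfolding F_def using AV by (intro sum.cong refl) (use W1 in auto)
  thus ?thesis using y by (simp add: deg_B adj_sym)
qed

lemma sidorenko:
  assumes m: "card E > 0" and k: "1 \<le> k"
  shows "(\<Sum>x\<in>A. W E V (k + k) x x) \<ge> real (card E) ^ (2 * k) / (real (card A) ^ k * real (card B) ^ k)"
proof -
  define m where "m = real (card E)"
  define a where "a = real (card A)"
  define b where "b = real (card B)"
  have a0: "a > 0" and b0: "b > 0" and m0: "m > 0" using card_pos[OF m] m by (auto simp: a_def b_def m_def)
  have S0: "S A 0 = a" using S0[OF AV] by (simp add: a_def)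
  have "m ^ 2 = (\<Sum>y\<in>B. F A 1 y) ^ 2" using sum_deg_B F1_B by (simp add: m_def)
  also have "\<dots> \<le> (\<Sum>y\<in>B. (F A 1 y) ^ 2) * b" unfolding b_def by (rule sum_squared_le_sum_of_squares)
  also have "(\<Sum>y\<in>B. (F A 1 y) ^ 2) \<le> S A 1"
    unfolding S_def using BV finV by (intro sum_mono2) auto
  finally have S1: "m ^ 2 / b \<le> S A 1" using b0 by (simp add: mult_right_mono divide_le_eq)
  have S1pos: "S A 1 > 0" using S1 m0 b0 by (smt (verit) divide_pos_pos zero_less_power)
  have lc: "\<And>j. 1 \<le> j \<Longrightarrow> j < k + 1 \<Longrightarrow> (S A j)^2 \<le> S A (j-1) * S A (j+1)"
    using lc_global by blast
  have "S A k \<ge> S A 0 * (S A 1 / S A 0) ^ k"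
    using lc_lower[of "S A" "k+1", OF _ S1pos lc] S0 a0 by simp
  moreover have "S A k \<le> a * (\<Sum>x\<in>A. W E V (k + k) x x)" using S_upper[OF AV] by (simp add: a_def)
  ultimately have "a * (S A 1 / a) ^ k \<le> a * (\<Sum>x\<in>A. W E V (k + k) x x)" using S0 by simp
  hence "(S A 1 / a) ^ k \<le> (\<Sum>x\<in>A. W E V (k + k) x x)" using a0 by simp
  moreover have "(m ^ 2 / b / a) ^ k \<le> (S A 1 / a) ^ k"
    using S1 a0 b0 by (intro power_mono divide_right_mono) auto
  moreover have "(m ^ 2 / b / a) ^ k = m ^ (2 * k) / (a ^ k * b ^ k)"
    by (simp add: power_divide power_mult_distrib power_mult[symmetric] mult.commute[of 2])
  ultimately show ?thesis by (simp add: m_def a_def b_def)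
qed

lemma pv:
  assumes x: "x \<in> V" and k: "2 \<le> k" and r: "1 \<le> r" "r < 2 * k" and mu: "\<mu> \<ge> 1"
  shows "W E V r x x * W E V (2 * k - r) x x \<le> \<mu>^(k*k) * deg x ^ k + W E V (k + k) x x / \<mu>"
proof -
  have nn: "0 \<le> \<mu>^(k*k) * deg x ^ k + W E V (k + k) x x / \<mu>"
    using mu deg_nonneg[of x] W_nonneg[of "k+k" x x] by simp
  show ?thesis
  proof (cases "odd r")
    case True thus ?thesis using nn W_odd[OF True, of x] by simp
  next
    case False
    then obtain p where p: "r = p + p" by (metis evenE mult_2)
    define q where "q = k - p"
    have p1: "1 \<le> p" and q1: "1 \<le> q" and pq: "p + q = k" and rq: "2 * k - r = q + q"
      using p r unfolding q_def by auto
    define s where "s t = W E V (t + t) x x" for t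
    have LHS: "W E V r x x * W E V (2 * k - r) x x = s p * s q" using rq unfolding s_def p by simp
    show ?thesis
    proof (cases "deg x = 0")
      case True
      have "p + p = Suc (p + p - 1)" using p1 by simp
      hence "s p = 0" unfolding s_def using W_iso[OF True] by metis
      hence "W E V r x x * W E V (2 * k - r) x x = 0" using LHS by simp
      thus ?thesis using nn by linarith
    next
      case False
      hence dpos: "deg x > 0" using deg_nonneg[of x] by simp
      have s0: "s 0 = 1" using x by (simp add: s_def W0)
      have s1: "s 1 = deg x" using W2[OF x] by (simp add: s_def)
      have lc: "\<And>j. 1 \<le> j \<Longrightarrow> j < k \<Longrightarrow> (s j)^2 \<le> s (j-1) * s (j+1)"
        unfolding s_def using lc_vertex by blast
      have pos: "\<And>j. j \<le> k \<Longrightarrow> s j > 0"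
        using lc_pos[of s k, OF _ _ lc] s0 s1 dpos by simp
      have "s p * s q \<le> \<mu>^(k*k) * (s 1)^k + s k / \<mu>"
        by (rule lc_jump[OF pos s0 lc pq p1 q1 mu])
      thus ?thesis using LHS s1 by (simp add: s_def)
    qed
  qed
qed

lemma card_split: "finite X \<Longrightarrow> card {x \<in> X. P x} + card {x \<in> X. \<not> P x} = card X"
proof -
  assume fin: "finite X"
  have "X = {x \<in> X. P x} \<union> {x \<in> X. \<not> P x}" by auto
  hence "card X = card ({x \<in> X. P x} \<union> {x \<in> X. \<not> P x})" by simp
  also have "\<dots> = card {x \<in> X. P x} + card {x \<in> X. \<not> P x}"
    by (rule card_Un_disjoint) (use fin in auto)
  finally show ?thesis by simp
qed

lemma count_main:
  assumes k: "2 \<le> k" and m: "card E > 0"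
    and DA: "\<And>x. x \<in> A \<Longrightarrow> deg x \<le> DA" and DB: "\<And>y. y \<in> B \<Longrightarrow> deg y \<le> DB"
  shows "real (card E) ^ (2*k) / (2 * (real (card A) ^ k * real (card B) ^ k))
         - real (2*k) ^ 2 * (2 * real (2*k) ^ 2) ^ (k*k) * (real (card A) * DA ^ k + real (card B) * DB ^ k)
         \<le> real (2*k) ^ (2*k) * real (card (cycle_copies (2*k) E))"
proof -
  define n where "n = 2 * k"
  define \<mu> where "\<mu> = 2 * real n ^ 2"
  define HV where "HV = (\<Sum>v\<in>V. W E V n v v)"
  define T where "T = real (card E) ^ (2*k) / (real (card A) ^ k * real (card B) ^ k)"
  define SD where "SD = (\<Sum>x\<in>V. deg x ^ k)"
  define P where "P = {(i, j). i < j \<and> j < n}"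
  have n0: "0 < n" and nkk: "n = k + k" using k by (auto simp: n_def)
  have n1: "real n ^ 2 \<ge> 1" using n0 by simp
  have mu1: "\<mu> \<ge> 1" using n1 by (simp add: \<mu>_def)
  have HVnn: "HV \<ge> 0" unfolding HV_def by (intro sum_nonneg W_nonneg)
  have SDnn: "SD \<ge> 0" unfolding SD_def using deg_nonneg by (simp add: sum_nonneg)
  have splitc: "(\<Sum>v\<in>V. real (card {f \<in> Pth E V n v v. inj_on f {..<n}}))
      = HV - (\<Sum>v\<in>V. real (card {f \<in> Pth E V n v v. \<not> inj_on f {..<n}}))"
  proof -
    have "real (card {f \<in> Pth E V n v v. inj_on f {..<n}}) =
          W E V n v v - real (card {f \<in> Pth E V n v v. \<not> inj_on f {..<n}})" for v
      using card_split[OF finite_Pth[of n v v], where P="\<lambda>f. inj_on f {..<n}"]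
      unfolding W_def by linarith
    thus ?thesis unfolding HV_def by (simp add: sum_subtractf)
  qed
  have D1: "(\<Sum>v\<in>V. real (card {f \<in> Pth E V n v v. \<not> inj_on f {..<n}}))
      \<le> (\<Sum>(i, j)\<in>P. \<Sum>x\<in>V. W E V (j - i) x x * W E V (n - (j - i)) x x)"
    unfolding P_def by (rule degenerate)
  have D2: "(\<Sum>x\<in>V. W E V (j - i) x x * W E V (n - (j - i)) x x) \<le> \<mu>^(k*k) * SD + HV / \<mu>"
    if "(i, j) \<in> P" for i j
  proof -
    have r: "1 \<le> j - i" "j - i < 2 * k" using that by (auto simp: P_def n_def)
    have "(\<Sum>x\<in>V. W E V (j - i) x x * W E V (n - (j - i)) x x)
        \<le> (\<Sum>x\<in>V. \<mu>^(k*k) * deg x ^ k + W E V (k + k) x x / \<mu>)"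
      unfolding n_def by (intro sum_mono pv[OF _ k r mu1])
    also have "\<dots> = \<mu>^(k*k) * SD + HV / \<mu>"
      unfolding SD_def HV_def nkk by (simp add: sum.distrib sum_distrib_left sum_divide_distrib)
    finally show ?thesis .
  qed
  have finP: "finite P" unfolding P_def
    by (rule finite_subset[of _ "{..<n} \<times> {..<n}"]) auto
  have cardP: "card P \<le> n * n"
  proof -
    have "card P \<le> card ({..<n} \<times> {..<n})" unfolding P_def by (rule card_mono) auto
    thus ?thesis by (simp add: card_cartesian_product)
  qed
  have "(\<Sum>(i, j)\<in>P. \<Sum>x\<in>V. W E V (j - i) x x * W E V (n - (j - i)) x x)
      \<le> real (card P) * (\<mu>^(k*k) * SD + HV / \<mu>)"
    by (rule sum_bounded_above) (use D2 in auto)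
  also have "\<dots> \<le> real n ^ 2 * (\<mu>^(k*k) * SD + HV / \<mu>)"
  proof (rule mult_right_mono)
    show "real (card P) \<le> real n ^ 2" using cardP by (simp add: power2_eq_square of_nat_mono[OF cardP, simplified])
    show "0 \<le> \<mu>^(k*k) * SD + HV / \<mu>" using mu1 SDnn HVnn by simp
  qed
  also have "\<dots> = real n ^ 2 * \<mu>^(k*k) * SD + HV / 2"
    using n0 by (simp add: \<mu>_def field_simps)
  finally have Dtot: "(\<Sum>v\<in>V. real (card {f \<in> Pth E V n v v. \<not> inj_on f {..<n}}))
      \<le> real n ^ 2 * \<mu>^(k*k) * SD + HV / 2" using D1 by linarith
  have SDb: "SD \<le> real (card A) * DA ^ k + real (card B) * DB ^ k"
  proof -
    have "SD = (\<Sum>x\<in>A. deg x ^ k) + (\<Sum>x\<in>B. deg x ^ k)"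
      unfolding SD_def V_eq using finA finB disj by (simp add: sum.union_disjoint)
    also have "(\<Sum>x\<in>A. deg x ^ k) \<le> real (card A) * DA ^ k"
      by (rule sum_bounded_above) (use DA deg_nonneg in \<open>auto intro: power_mono\<close>)
    also have "(\<Sum>x\<in>B. deg x ^ k) \<le> real (card B) * DB ^ k"
      by (rule sum_bounded_above) (use DB deg_nonneg in \<open>auto intro: power_mono\<close>)
    finally show ?thesis by simp
  qed
  have HT: "T \<le> HV"
  proof -
    have "T \<le> (\<Sum>x\<in>A. W E V (k + k) x x)" unfolding T_def using sidorenko[OF m] k by simp
    also have "\<dots> \<le> HV" unfolding HV_def nkk using AV finV by (intro sum_mono2) (auto simp: W_nonneg)
    finally show ?thesis .
  qed
  have fib: "(\<Sum>v\<in>V. real (card {f \<in> Pth E V n v v. inj_on f {..<n}})) \<le> real n ^ n * real (card (cycle_copies n E))"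
    by (rule fiber[OF n0])
  have Lnn: "real n ^ 2 * \<mu>^(k*k) \<ge> 0" using mu1 by simp
  have "T / 2 - real n ^ 2 * \<mu>^(k*k) * (real (card A) * DA ^ k + real (card B) * DB ^ k)
      \<le> HV / 2 - real n ^ 2 * \<mu>^(k*k) * SD"
    using HT SDb mult_left_mono[OF SDb Lnn] by linarith
  also have "\<dots> \<le> real n ^ n * real (card (cycle_copies n E))" using fib splitc Dtot by linarith
  finally show ?thesis unfolding T_def \<mu>_def n_def by (simp add: field_simps)
qed

end


lemma arith_ll:
  fixes a b m m1 K L X :: real and k :: nat
  assumes a: "a > 0" and b: "b > 0" and m: "m > 0" and K: "K > 0" and L: "L \<ge> 0"
    and h1: "m^k \<ge> (8*9^k*L*K^k) * a^k * b" and h2: "m^k \<ge> (8*9^k*L*K^k) * a * b^k"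
    and m1: "m1 \<ge> m/3"
    and X: "X \<ge> m1^(2*k)/(2*(a^k*b^k)) - L*(a*(K*m/a)^k + b*(K*m/b)^k)"
  shows "X \<ge> m^(2*k)/(4*9^k*(a^k*b^k))"
proof -
  define T0 where "T0 = m^(2*k)/(9^k*(a^k*b^k))"
  have ab: "a^k*b^k > 0" using a b by simp
  have "(m/3)^(2*k) \<le> m1^(2*k)" using m m1 by (intro power_mono) auto
  moreover have "(3::real)^(2*k) = 9^k" by (simp add: power_mult)
  moreover have "(m/3)^(2*k) = m^(2*k)/3^(2*k)" by (simp add: power_divide)
  ultimately have mm1: "m^(2*k)/9^k \<le> m1^(2*k)" by simp
  have "T0/2 = (m^(2*k)/9^k)/(2*(a^k*b^k))" unfolding T0_def by simp
  also have "\<dots> \<le> m1^(2*k)/(2*(a^k*b^k))" by (rule divide_right_mono[OF mm1]) (use ab in simp)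
  finally have t1: "T0/2 \<le> m1^(2*k)/(2*(a^k*b^k))" .
  have mm: "m^(2*k) = m^k * m^k" by (simp add: mult_2 power_add)
  have t2: "L*(a*(K*m/a)^k) \<le> T0/8"
  proof -
    have "L*(a*(K*m/a)^k) = (L*K^k*a*b^k) * m^k / (a^k*b^k)"
      using a b by (simp add: power_divide power_mult_distrib field_simps)
    also have "\<dots> \<le> (m^k/(8*9^k)) * m^k / (a^k*b^k)"
    proof -
      have "L*K^k*a*b^k \<le> m^k/(8*9^k)" using h2 by (simp add: field_simps)
      thus ?thesis using ab m by (intro divide_right_mono mult_right_mono) auto
    qed
    also have "\<dots> = T0/8" unfolding T0_def mm by (simp add: field_simps)
    finally show ?thesis .
  qed
  have t3: "L*(b*(K*m/b)^k) \<le> T0/8"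
  proof -
    have "L*(b*(K*m/b)^k) = (L*K^k*a^k*b) * m^k / (a^k*b^k)"
      using a b by (simp add: power_divide power_mult_distrib field_simps)
    also have "\<dots> \<le> (m^k/(8*9^k)) * m^k / (a^k*b^k)"
    proof -
      have "L*K^k*a^k*b \<le> m^k/(8*9^k)" using h1 by (simp add: field_simps)
      thus ?thesis using ab m by (intro divide_right_mono mult_right_mono) auto
    qed
    also have "\<dots> = T0/8" unfolding T0_def mm by (simp add: field_simps)
    finally show ?thesis .
  qed
  have "X \<ge> T0/4" using X t1 t2 t3 by (simp add: distrib_left)
  thus ?thesis unfolding T0_def by (simp add: field_simps)
qed

lemma arith_red:
  fixes a b a' b' m m' K C :: real and k :: nat
  assumes a: "a > 0" and b: "b > 0" and a': "a' > 0" and b': "b' > 0" and m: "m > 0" and k: "k \<ge> 1"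
    and K: "K \<ge> 9^k" and C: "C \<ge> 0"
    and ab: "(a' \<le> a/K \<and> b' \<le> b) \<or> (a' \<le> a \<and> b' \<le> b/K)"
    and m': "m' \<ge> m/3"
    and h1: "m^k \<ge> C*a^k*b" and h2: "m^k \<ge> C*a*b^k"
  shows "m'^k \<ge> C*a'^k*b'" "m'^k \<ge> C*a'*b'^k" "m'^(2*k)/(a'^k*b'^k) \<ge> m^(2*k)/(a^k*b^k)"
proof -
  have K9: "K \<ge> 9" using K k by (metis order_trans power_increasing power_one_right zero_less_numeral less_imp_le one_le_numeral)
  hence K0: "K > 0" by simp
  have K3: "K \<ge> 3^k"
  proof -
    have "(3::real)^k \<le> 9^k" by (rule power_mono) auto
    thus ?thesis using K by simp
  qed
  have Kk9: "K^k \<ge> 9^k" using K9 by (intro power_mono) auto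
  have Kk3: "K^k \<ge> 3^k" using K9 by (intro power_mono) auto
  have P: "a'^k*b'^k \<le> a^k*b^k/9^k" and Q1: "a'^k*b' \<le> a^k*b/3^k" and Q2: "a'*b'^k \<le> a*b^k/3^k"
  proof -
    have "(a'^k*b'^k \<le> a^k*b^k/9^k) \<and> (a'^k*b' \<le> a^k*b/3^k) \<and> (a'*b'^k \<le> a*b^k/3^k)"
    proof (cases "a' \<le> a/K \<and> b' \<le> b")
      case True
      have ak: "a'^k \<le> a^k/K^k" using True a' by (metis power_divide power_mono less_imp_le)
      have bk: "b'^k \<le> b^k" using True b' by (intro power_mono) auto
      have "a^k/K^k \<le> a^k/9^k" using Kk9 a using K0 by (intro divide_left_mono) auto
      moreover have "a^k/K^k \<le> a^k/3^k" using Kk3 a using K0 by (intro divide_left_mono) auto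
      moreover have "a/K \<le> a/3^k" using K3 a using K0 by (intro divide_left_mono) auto
      ultimately have ak9: "a'^k \<le> a^k/9^k" and ak3: "a'^k \<le> a^k/3^k" and a3: "a' \<le> a/3^k"
        using ak True by linarith+
      have "a'^k*b'^k \<le> (a^k/9^k)*b^k" by (rule mult_mono[OF ak9 bk]) (use a b a' b' in auto)
      moreover have "a'^k*b' \<le> (a^k/3^k)*b" by (rule mult_mono[OF ak3]) (use a b a' b' True in auto)
      moreover have "a'*b'^k \<le> (a/3^k)*b^k" by (rule mult_mono[OF a3 bk]) (use a b a' b' in auto)
      ultimately show ?thesis by simp
    next
      case False
      hence True': "a' \<le> a \<and> b' \<le> b/K" using ab by auto
      have bk: "b'^k \<le> b^k/K^k" using True' b' by (metis power_divide power_mono less_imp_le)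
      have ak: "a'^k \<le> a^k" using True' a' by (intro power_mono) auto
      have "b^k/K^k \<le> b^k/9^k" using Kk9 b using K0 by (intro divide_left_mono) auto
      moreover have "b^k/K^k \<le> b^k/3^k" using Kk3 b using K0 by (intro divide_left_mono) auto
      moreover have "b/K \<le> b/3^k" using K3 b using K0 by (intro divide_left_mono) auto
      ultimately have bk9: "b'^k \<le> b^k/9^k" and bk3: "b'^k \<le> b^k/3^k" and b3: "b' \<le> b/3^k"
        using bk True' by linarith+
      have "a'^k*b'^k \<le> a^k*(b^k/9^k)" by (rule mult_mono[OF ak bk9]) (use a b a' b' in auto)
      moreover have "a'^k*b' \<le> a^k*(b/3^k)" by (rule mult_mono[OF ak b3]) (use a b a' b' in auto)
      moreover have "a'*b'^k \<le> a*(b^k/3^k)" by (rule mult_mono[OF _ bk3]) (use a b a' b' True' in auto)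
      ultimately show ?thesis by simp
    qed
    thus "a'^k*b'^k \<le> a^k*b^k/9^k" "a'^k*b' \<le> a^k*b/3^k" "a'*b'^k \<le> a*b^k/3^k" by auto
  qed
  have mk: "m^k/3^k \<le> m'^k"
  proof -
    have "(m/3)^k \<le> m'^k" using m m' by (intro power_mono) auto
    thus ?thesis by (simp add: power_divide)
  qed
  show "m'^k \<ge> C*a'^k*b'"
  proof -
    have "C*a'^k*b' \<le> C*(a^k*b/3^k)" using mult_left_mono[OF Q1 C] by (simp add: mult.assoc)
    also have "\<dots> \<le> m^k/3^k" using h1 by (simp add: field_simps)
    finally show ?thesis using mk by simp
  qed
  show "m'^k \<ge> C*a'*b'^k"
  proof -
    have "C*a'*b'^k \<le> C*(a*b^k/3^k)" using mult_left_mono[OF Q2 C] by (simp add: mult.assoc)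
    also have "\<dots> \<le> m^k/3^k" using h2 by (simp add: field_simps)
    finally show ?thesis using mk by simp
  qed
  have m2k: "m^(2*k)/9^k \<le> m'^(2*k)"
  proof -
    have "(m/3)^(2*k) \<le> m'^(2*k)" using m m' by (intro power_mono) auto
    moreover have "(3::real)^(2*k) = 9^k" by (simp add: power_mult)
    ultimately show ?thesis by (simp add: power_divide)
  qed
  have "m^(2*k)/(a^k*b^k) = (m^(2*k)/9^k)/(a^k*b^k/9^k)" by simp
  also have "\<dots> \<le> m'^(2*k)/(a'^k*b'^k)"
    using m2k P a' b' m by (intro frac_le) auto
  finally show "m'^(2*k)/(a'^k*b'^k) \<ge> m^(2*k)/(a^k*b^k)" .
qed



lemma bip_bp:
  assumes bg: "bipartite_graph A B E"
  shows "bp E (A \<union> B) A B"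
proof -
  have fA: "finite A" and fB: "finite B" and d: "A \<inter> B = {}"
    and ed: "\<forall>e\<in>E. \<exists>x\<in>A. \<exists>y\<in>B. e = {x, y}" using bg unfolding bipartite_graph_def by auto
  have g: "gr E (A \<union> B)" unfolding gr_def
  proof (intro conjI allI impI)
    show "finite (A \<union> B)" using fA fB by simp
    fix e assume "e \<in> E"
    then obtain x y where "x \<in> A" "y \<in> B" "e = {x, y}" using ed by blast
    thus "e \<subseteq> A \<union> B" by simp
  qed
  have ed': "\<forall>e. e \<in> E \<longrightarrow> (\<exists>x\<in>A. \<exists>y\<in>B. e = {x, y})" using ed by simp
  show ?thesis unfolding bp_def bp_axioms_def using g d ed' by simp
qed

lemma copies_mono:
  assumes "E' \<subseteq> E" "finite E"
  shows "card (cycle_copies n E') \<le> card (cycle_copies n E)"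
proof (rule card_mono)
  show "finite (cycle_copies n E)" unfolding cycle_copies_def
    by (rule finite_subset[of _ "Pow E"]) (use assms in auto)
  show "cycle_copies n E' \<subseteq> cycle_copies n E" using assms(1) unfolding cycle_copies_def by auto
qed

lemma bip_sub_A:
  assumes bg: "bipartite_graph A B E" and sub: "A' \<subseteq> A"
  shows "bipartite_graph A' B {e \<in> E. e \<inter> A' \<noteq> {}}"
proof -
  have fA: "finite A" and fB: "finite B" and d: "A \<inter> B = {}"
    and ed: "\<forall>e\<in>E. \<exists>x\<in>A. \<exists>y\<in>B. e = {x, y}" using bg unfolding bipartite_graph_def by auto
  have "finite A'" using finite_subset[OF sub fA] .
  moreover have "A' \<inter> B = {}" using d sub by blast
  moreover have "\<forall>e\<in>{e \<in> E. e \<inter> A' \<noteq> {}}. \<exists>x\<in>A'. \<exists>y\<in>B. e = {x, y}"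
  proof
    fix e assume e: "e \<in> {e \<in> E. e \<inter> A' \<noteq> {}}"
    then obtain x y where xy: "x \<in> A" "y \<in> B" "e = {x, y}" using ed by blast
    have "y \<notin> A'" using xy d sub by blast
    hence "x \<in> A'" using e xy by auto
    thus "\<exists>x\<in>A'. \<exists>y\<in>B. e = {x, y}" using xy by blast
  qed
  ultimately show ?thesis using fB unfolding bipartite_graph_def by blast
qed

lemma bip_sub_B:
  assumes bg: "bipartite_graph A B E" and sub: "B' \<subseteq> B"
  shows "bipartite_graph A B' {e \<in> E. e \<inter> B' \<noteq> {}}"
proof -
  have fA: "finite A" and fB: "finite B" and d: "A \<inter> B = {}"
    and ed: "\<forall>e\<in>E. \<exists>x\<in>A. \<exists>y\<in>B. e = {x, y}" using bg unfolding bipartite_graph_def by auto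
  have "finite B'" using finite_subset[OF sub fB] .
  moreover have "A \<inter> B' = {}" using d sub by blast
  moreover have "\<forall>e\<in>{e \<in> E. e \<inter> B' \<noteq> {}}. \<exists>x\<in>A. \<exists>y\<in>B'. e = {x, y}"
  proof
    fix e assume e: "e \<in> {e \<in> E. e \<inter> B' \<noteq> {}}"
    then obtain x y where xy: "x \<in> A" "y \<in> B" "e = {x, y}" using ed by blast
    have "x \<notin> B'" using xy d sub by blast
    hence "y \<in> B'" using e xy by auto
    thus "\<exists>x\<in>A. \<exists>y\<in>B'. e = {x, y}" using xy by blast
  qed
  ultimately show ?thesis using fA unfolding bipartite_graph_def by blast
qed

lemma bip_sub_E:
  assumes "bipartite_graph A B E" "E' \<subseteq> E"
  shows "bipartite_graph A B E'"
  using assms unfolding bipartite_graph_def by blast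

lemma deg_mono:
  assumes "E' \<subseteq> E" "gr E V" "gr E' V" shows "gr.deg E' V x \<le> gr.deg E V x"
proof -
  have "adj E' x y \<le> adj E x y" for y using assms by (auto simp: adj_def)
  thus ?thesis unfolding gr.deg_def[OF assms(2)] gr.deg_def[OF assms(3)] by (simp add: sum_mono)
qed

lemma main_claim:
  fixes k :: nat and L K C c :: real
  assumes k: "2 \<le> k"
    and L_def: "L = real (2*k) ^ 2 * (2 * real (2*k) ^ 2) ^ (k*k)"
    and K_def: "K = 9^k"
    and C_def: "C = 8*9^k*L*K^k"
    and c_def: "c = 1/(4*9^k*real (2*k)^(2*k))"
  shows "bipartite_graph A B E \<Longrightarrow>
    real (card E)^k \<ge> C * real (card A)^k * real (card B) \<Longrightarrow>
    real (card E)^k \<ge> C * real (card A) * real (card B)^k \<Longrightarrow>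
    c * real (card E)^(2*k) / (real (card A)^k * real (card B)^k) \<le> real (card (cycle_copies (2*k) E))"
proof (induction "card A + card B" arbitrary: A B E rule: less_induct)
  case (less A B E)
  note bg = less.prems(1) and h1 = less.prems(2) and h2 = less.prems(3)
  define a where "a = real (card A)"
  define b where "b = real (card B)"
  define m where "m = real (card E)"
  have k1: "k \<ge> 1" using k by simp
  have L0: "L \<ge> 0" unfolding L_def by simp
  have K9: "K \<ge> 9^k" unfolding K_def by simp
  have Kge9: "K \<ge> 9" unfolding K_def using k1
    by (metis power_increasing power_one_right one_le_numeral)
  have K0: "K > 0" using Kge9 by simp
  have C0: "C \<ge> 0" unfolding C_def using L0 K0 by simp
  have c0: "c \<ge> 0" unfolding c_def by simp
  show ?case
  proof (cases "card E = 0")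
    case True
    have z: "real (card E) ^ (2*k) = 0" using k True by (simp add: power_0_left)
    show ?thesis unfolding z by simp
  next
    case False
    hence mpos: "card E > 0" by simp
    interpret G: bp E "A \<union> B" A B by (rule bip_bp[OF bg])
    have a0: "a > 0" and b0: "b > 0" using G.card_pos[OF mpos] by (auto simp: a_def b_def)
    have m0: "m > 0" using mpos by (simp add: m_def)
    have finE: "finite E" by (rule G.finE)
    define Ah where "Ah = {x \<in> A. G.deg x > K*m/a}"
    define Bh where "Bh = {y \<in> B. G.deg y > K*m/b}"
    define E1 where "E1 = {e \<in> E. e \<inter> Ah = {} \<and> e \<inter> Bh = {}}"
    define E2 where "E2 = {e \<in> E. e \<inter> Ah \<noteq> {}}"
    define E3 where "E3 = {e \<in> E. e \<inter> Bh \<noteq> {}}"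
    have AhA: "Ah \<subseteq> A" and BhB: "Bh \<subseteq> B" by (auto simp: Ah_def Bh_def)
    have cardAh: "real (card Ah) \<le> a / K"
    proof -
      have "real (card Ah) * (K*m/a) \<le> (\<Sum>x\<in>Ah. G.deg x)"
        by (rule sum_bounded_below) (auto simp: Ah_def less_imp_le)
      also have "\<dots> \<le> (\<Sum>x\<in>A. G.deg x)"
        using AhA G.finA G.deg_nonneg by (intro sum_mono2) auto
      also have "\<dots> = m" using G.sum_deg_A by (simp add: m_def)
      finally have "real (card Ah) * (K*m/a) \<le> m" .
      hence "real (card Ah) * K \<le> a" using m0 a0 by (simp add: field_simps)
      thus ?thesis using K0 by (simp add: field_simps)
    qed
    have cardBh: "real (card Bh) \<le> b / K"
    proof -
      have "real (card Bh) * (K*m/b) \<le> (\<Sum>x\<in>Bh. G.deg x)"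
        by (rule sum_bounded_below) (auto simp: Bh_def less_imp_le)
      also have "\<dots> \<le> (\<Sum>x\<in>B. G.deg x)"
        using BhB G.finB G.deg_nonneg by (intro sum_mono2) auto
      also have "\<dots> = m" using G.sum_deg_B by (simp add: m_def)
      finally have "real (card Bh) * (K*m/b) \<le> m" .
      hence "real (card Bh) * K \<le> b" using m0 b0 by (simp add: field_simps)
      thus ?thesis using K0 by (simp add: field_simps)
    qed
    have cover: "m \<le> real (card E1) + real (card E2) + real (card E3)"
    proof -
      have "E \<subseteq> E1 \<union> E2 \<union> E3" unfolding E1_def E2_def E3_def by blast
      hence "card E \<le> card (E1 \<union> E2 \<union> E3)"
        by (intro card_mono) (use finE in \<open>auto simp: E1_def E2_def E3_def\<close>)
      also have "\<dots> \<le> card (E1 \<union> E2) + card E3" by (rule card_Un_le)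
      also have "\<dots> \<le> card E1 + card E2 + card E3" using card_Un_le[of E1 E2] by simp
      finally show ?thesis unfolding m_def by linarith
    qed
    have copies_le: "card (cycle_copies (2*k) E') \<le> card (cycle_copies (2*k) E)" if "E' \<subseteq> E" for E'
      by (rule copies_mono[OF that finE])
    consider "real (card E2) \<ge> m/3" | "real (card E3) \<ge> m/3" | "real (card E1) \<ge> m/3"
      using cover by linarith
    then show ?thesis
    proof cases
      case 1
      define a2 where "a2 = real (card Ah)"
      have bg2: "bipartite_graph Ah B E2" unfolding E2_def by (rule bip_sub_A[OF bg AhA])
      have a2pos: "a2 > 0"
      proof -
        have "card E2 > 0" using 1 m0 by linarith
        then obtain e where "e \<in> E2" by (metis card_gt_0_iff ex_in_conv)
        hence "Ah \<noteq> {}" unfolding E2_def by auto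
        thus ?thesis unfolding a2_def using finite_subset[OF AhA G.finA] by (simp add: card_gt_0_iff)
      qed
      have a2le: "a2 \<le> a / K" using cardAh by (simp add: a2_def)
      have "a / K < a" using a0 Kge9 by (simp add: divide_less_eq)
      hence "card Ah < card A" using a2le by (simp add: a2_def a_def)
      hence lt: "card Ah + card B < card A + card B" by simp
      have red: "real (card E2)^k \<ge> C*a2^k*b" "real (card E2)^k \<ge> C*a2*b^k"
        "real (card E2)^(2*k)/(a2^k*b^k) \<ge> m^(2*k)/(a^k*b^k)"
        using arith_red[OF a0 b0 a2pos b0 m0 k1 K9 C0 _ 1] a2le h1 h2
        by (auto simp: a_def b_def m_def)
      have IH: "c * real (card E2)^(2*k) / (a2^k * b^k) \<le> real (card (cycle_copies (2*k) E2))"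
        using less.hyps[OF lt bg2] red(1,2) by (simp add: a2_def b_def)
      have "c * m^(2*k) / (a^k*b^k) \<le> c * real (card E2)^(2*k) / (a2^k * b^k)"
        using mult_left_mono[OF red(3) c0] by simp
      also have "\<dots> \<le> real (card (cycle_copies (2*k) E))"
        using IH copies_le[of E2] by (auto simp: E2_def)
      finally show ?thesis by (simp add: a_def b_def m_def)
    next
      case 2
      define b2 where "b2 = real (card Bh)"
      have bg2: "bipartite_graph A Bh E3" unfolding E3_def by (rule bip_sub_B[OF bg BhB])
      have b2pos: "b2 > 0"
      proof -
        have "card E3 > 0" using 2 m0 by linarith
        then obtain e where "e \<in> E3" by (metis card_gt_0_iff ex_in_conv)
        hence "Bh \<noteq> {}" unfolding E3_def by auto
        thus ?thesis unfolding b2_def using finite_subset[OF BhB G.finB] by (simp add: card_gt_0_iff)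
      qed
      have b2le: "b2 \<le> b / K" using cardBh by (simp add: b2_def)
      have "b / K < b" using b0 Kge9 by (simp add: divide_less_eq)
      hence "card Bh < card B" using b2le by (simp add: b2_def b_def)
      hence lt: "card A + card Bh < card A + card B" by simp
      have red: "real (card E3)^k \<ge> C*a^k*b2" "real (card E3)^k \<ge> C*a*b2^k"
        "real (card E3)^(2*k)/(a^k*b2^k) \<ge> m^(2*k)/(a^k*b^k)"
        using arith_red[OF a0 b0 a0 b2pos m0 k1 K9 C0 _ 2] b2le h1 h2
        by (auto simp: a_def b_def m_def)
      have IH: "c * real (card E3)^(2*k) / (a^k * b2^k) \<le> real (card (cycle_copies (2*k) E3))"
        using less.hyps[OF lt bg2] red(1,2) by (simp add: a_def b2_def)
      have "c * m^(2*k) / (a^k*b^k) \<le> c * real (card E3)^(2*k) / (a^k * b2^k)"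
        using mult_left_mono[OF red(3) c0] by simp
      also have "\<dots> \<le> real (card (cycle_copies (2*k) E))"
        using IH copies_le[of E3] by (auto simp: E3_def)
      finally show ?thesis by (simp add: a_def b_def m_def)
    next
      case 3
      have E1E: "E1 \<subseteq> E" by (auto simp: E1_def)
      interpret G1: bp E1 "A \<union> B" A B by (rule bip_bp[OF bip_sub_E[OF bg E1E]])
      have grE: "gr E (A \<union> B)" and grE1: "gr E1 (A \<union> B)" by unfold_locales
      have m1pos: "card E1 > 0" using 3 m0 by linarith
      have DA: "G1.deg x \<le> K*m/a" if x: "x \<in> A" for x
      proof (cases "x \<in> Ah")
        case True
        have "\<forall>y\<in>A \<union> B. adj E1 x y = 0" unfolding adj_def E1_def using True by auto
        hence "G1.deg x = 0" unfolding gr.deg_def[OF grE1] by simp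
        thus ?thesis using K0 m0 a0 by simp
      next
        case False
        have "G1.deg x \<le> G.deg x" by (rule deg_mono[OF E1E grE grE1])
        also have "\<dots> \<le> K*m/a" using False x unfolding Ah_def by auto
        finally show ?thesis .
      qed
      have DB: "G1.deg y \<le> K*m/b" if y: "y \<in> B" for y
      proof (cases "y \<in> Bh")
        case True
        have "\<forall>x\<in>A \<union> B. adj E1 y x = 0" unfolding adj_def E1_def using True by auto
        hence "G1.deg y = 0" unfolding gr.deg_def[OF grE1] by simp
        thus ?thesis using K0 m0 b0 by simp
      next
        case False
        have "G1.deg y \<le> G.deg y" by (rule deg_mono[OF E1E grE grE1])
        also have "\<dots> \<le> K*m/b" using False y unfolding Bh_def by auto
        finally show ?thesis .
      qed
      have cm: "real (card E1) ^ (2*k) / (2 * (a ^ k * b ^ k))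
         - L * (a * (K*m/a) ^ k + b * (K*m/b) ^ k)
         \<le> real (2*k) ^ (2*k) * real (card (cycle_copies (2*k) E1))"
        using G1.count_main[OF k m1pos DA DB] unfolding L_def a_def b_def by simp
      have X: "real (2*k) ^ (2*k) * real (card (cycle_copies (2*k) E1)) \<ge> m^(2*k)/(4*9^k*(a^k*b^k))"
        by (rule arith_ll[OF a0 b0 m0 K0 L0 _ _ 3 cm]) (use h1 h2 in \<open>simp_all add: C_def a_def b_def m_def\<close>)
      define N where "N = real (2*k) ^ (2*k)"
      define Q1 where "Q1 = real (card (cycle_copies (2*k) E1))"
      define T' where "T' = m^(2*k)/(4*9^k*(a^k*b^k))"
      have X': "T' \<le> N * Q1" using X unfolding N_def Q1_def T'_def .
      have npos: "N > 0" using k unfolding N_def by simp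
      have "c * m^(2*k) / (a^k*b^k) = T' / N"
        unfolding c_def T'_def N_def by (simp add: field_simps)
      also have "\<dots> \<le> Q1" using X' npos by (simp add: pos_divide_le_eq mult.commute)
      also have "\<dots> \<le> real (card (cycle_copies (2*k) E))" using copies_le[OF E1E] unfolding Q1_def by simp
      finally show ?thesis by (simp add: a_def b_def m_def)
    qed
  qed
qed



theorem mainTheorem3:
  fixes k :: nat
  assumes "k \<ge> 2"
  shows "\<exists>c1 c2 :: real. c1 > 0 \<and> c2 > 0 \<and>
    (\<forall>(A :: nat set) (B :: nat set) (E :: nat set set).
       bipartite_graph A B E \<longrightarrow> card A \<ge> card B \<longrightarrow>
       real (card E) \<ge> c1 * real (card A) * real (card B) powr (1 / real k) \<longrightarrow>
       real (card (cycle_copies (2 * k) E)) \<ge>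
         c2 * real (card E) ^ (2 * k) / (real (card A) ^ k * real (card B) ^ k))"
proof -
  have k: "2 \<le> k" by (rule assms)
  define L :: real where "L = real (2*k) ^ 2 * (2 * real (2*k) ^ 2) ^ (k*k)"
  define K :: real where "K = 9^k"
  define C :: real where "C = 8*9^k*L*K^k"
  define c :: real where "c = 1/(4*9^k*real (2*k)^(2*k))"
  have "real (2*k) \<ge> 1" using k by simp
  hence n1: "real (2*k) ^ 2 \<ge> 1" by (rule one_le_power)
  have L1: "L \<ge> 1"
  proof -
    have P1: "(2 * real (2*k) ^ 2) ^ (k*k) \<ge> 1" using n1 by (intro one_le_power) simp
    have "1 * 1 \<le> real (2*k) ^ 2 * (2 * real (2*k) ^ 2) ^ (k*k)"
      by (rule mult_mono[OF n1 P1]) auto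
    thus ?thesis unfolding L_def by simp
  qed
  have K1: "K \<ge> 1" unfolding K_def by simp
  have C1: "C \<ge> 1"
  proof -
    have "(1::real) \<le> 9^k" by (rule one_le_power) simp
    hence e1: "(1::real) \<le> 8*9^k" by linarith
    have e2: "1 \<le> K^k" using K1 by (rule one_le_power)
    have "1 * 1 \<le> (8*9^k) * K^k" by (rule mult_mono[OF e1 e2]) auto
    hence e3: "1 \<le> (8*9^k) * K^k" by simp
    have "1 * 1 \<le> ((8*9^k) * K^k) * L" by (rule mult_mono[OF e3 L1]) (use e3 K1 in auto)
    thus ?thesis unfolding C_def by (simp add: mult_ac)
  qed
  have c0: "c > 0" unfolding c_def using k by simp
  have main: "\<forall>(A :: nat set) (B :: nat set) (E :: nat set set).
       bipartite_graph A B E \<longrightarrow> card A \<ge> card B \<longrightarrow>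
       real (card E) \<ge> C * real (card A) * real (card B) powr (1 / real k) \<longrightarrow>
       real (card (cycle_copies (2 * k) E)) \<ge>
         c * real (card E) ^ (2 * k) / (real (card A) ^ k * real (card B) ^ k)"
  proof (intro allI impI)
    fix A B :: "nat set" and E :: "nat set set"
    assume bg: "bipartite_graph A B E" and ab: "card B \<le> card A"
      and hm: "C * real (card A) * real (card B) powr (1 / real k) \<le> real (card E)"
    define a where "a = real (card A)"
    define b where "b = real (card B)"
    define m where "m = real (card E)"
    have a0: "a \<ge> 0" and b0: "b \<ge> 0" and m0: "m \<ge> 0" and ba: "b \<le> a"
      using ab by (auto simp: a_def b_def m_def)
    have k1: "k \<ge> 1" using k by simp
    have h: "m^k \<ge> C * a^k * b \<and> m^k \<ge> C * a * b^k"
    proof (cases "b = 0")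
      case True
      have z: "b^k = 0" using k1 True by (simp add: power_0_left)
      have "0 \<le> m^k" using m0 by simp
      thus ?thesis unfolding z using True by simp
    next
      case False
      hence bpos: "b > 0" using b0 by simp
      have bp: "b powr (1 / real k) > 0" using bpos by simp
      have bk: "(b powr (1 / real k)) ^ k = b"
      proof -
        have "(b powr (1 / real k)) ^ k = (b powr (1 / real k)) powr (real k)"
          by (rule powr_realpow[OF bp, symmetric])
        also have "\<dots> = b powr (1 / real k * real k)" by (rule powr_powr)
        also have "\<dots> = b" using k1 bpos by simp
        finally show ?thesis .
      qed
      have "(C * a * b powr (1 / real k)) ^ k \<le> m ^ k"
        using hm C1 a0 bp by (intro power_mono) (auto simp: a_def b_def m_def)
      hence mk: "C^k * a^k * b \<le> m^k" by (simp add: power_mult_distrib bk)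
      have "C^1 \<le> C^k" using C1 k1 by (intro power_increasing) auto
      hence "C \<le> C^k" by simp
      hence "C * a^k * b \<le> C^k * a^k * b" using a0 b0 by (intro mult_right_mono) auto
      hence h1: "C * a^k * b \<le> m^k" using mk by linarith
      have "a * b^k \<le> a^k * b"
      proof -
        have "b^(k-1) \<le> a^(k-1)" using ba b0 by (intro power_mono) auto
        hence ineq: "(a*b) * b^(k-1) \<le> (a*b) * a^(k-1)" using a0 b0 by (intro mult_left_mono) auto
        have e1: "a * b^k = (a*b) * b^(k-1)" using k1 by (cases k) auto
        have e2: "a^k * b = (a*b) * a^(k-1)" using k1 by (cases k) auto
        show ?thesis unfolding e1 e2 by (rule ineq)
      qed
      hence "C * a * b^k \<le> C * a^k * b" using C1 by (simp add: mult.assoc mult_left_mono)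
      thus ?thesis using h1 by linarith
    qed
    have "c * real (card E)^(2*k) / (real (card A)^k * real (card B)^k) \<le> real (card (cycle_copies (2*k) E))"
      by (rule main_claim[OF k L_def K_def C_def c_def bg])
         (use h in \<open>simp_all add: a_def b_def m_def\<close>)
    thus "c * real (card E)^(2*k) / (real (card A)^k * real (card B)^k) \<le> real (card (cycle_copies (2*k) E))" .
  qed
  have C0: "C > 0" using C1 by simp
  show ?thesis by (rule exI[of _ C], rule exI[of _ c]) (use C0 c0 main in blast)
qed


end
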